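(* Let $F$ be a smooth distribution supported on $[0,1]$ with convex CDF (i.e. non-decreasing PDF $f$), and let $\epsilon>0$. Suppose we have access to a perturbed oracle $F^*$ which, when queried at $x$, returns $F^*(x)=F(x+\epsilon_1)+\epsilon_2$ for some unknown $\epsilon_1\in[-\epsilon^2/2,\epsilon^2/2]$ and $\epsilon_2\in[-\epsilon,\epsilon]$ (which may differ from query to query). Then $\tilde{O}(\epsilon^{-1/2})$ queries to $F^*$ suffice to learn $F$ within Lévy distance $O(\epsilon)$.
   Context: A distribution is smooth if it has no point masses and its PDF $f$ is $C^1$. Learning within Lévy distance $\eta$ means outputting $\hat F$ with $\mathrm{L\acute{e}vy}(F,\hat F)\le\eta$, where $\mathrm{L\acute{e}vy}(F,G)=\inf\{\epsilon: F(v-\epsilon)-\epsilon\le G(v)\le F(v+\epsilon)+\epsilon\ \forall v\}$. $\tilde{O}$ hides polylog$(1/\epsilon)$ factors. *)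

theory Defs
  imports "HOL-Analysis.Analysis"
begin

definition smooth_convex_cdf :: "(real \<Rightarrow> real) \<Rightarrow> bool" where
  "smooth_convex_cdf F \<longleftrightarrow>
     mono F \<and> continuous_on UNIV F \<and>
     (\<forall>x\<le>0. F x = 0) \<and> (\<forall>x\<ge>1. F x = 1) \<and>
     (\<exists>f f'. (\<forall>x\<in>{0..1}. (F has_real_derivative f x) (at x within {0..1})) \<and>
             (\<forall>x\<in>{0..1}. (f has_real_derivative f' x) (at x within {0..1})) \<and>
             continuous_on {0..1} f' \<and>
             mono_on {0..1} f)"

definition levy_set :: "(real \<Rightarrow> real) \<Rightarrow> (real \<Rightarrow> real) \<Rightarrow> real set" where
  "levy_set F G = {e. 0 \<le> e \<and> (\<forall>v. F (v - e) - e \<le> G v \<and> G v \<le> F (v + e) + e)}"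

definition levy_dist :: "(real \<Rightarrow> real) \<Rightarrow> (real \<Rightarrow> real) \<Rightarrow> real" where
  "levy_dist F G = Inf (levy_set F G)"

text \<open>A deterministic adaptive algorithm with N queries is a pair (q, out): q maps the
  list of answers received so far to the next query point, out maps the full list of
  N answers to the hypothesis CDF.\<close>
definition perturbed_answers ::
  "real \<Rightarrow> (real \<Rightarrow> real) \<Rightarrow> nat \<Rightarrow> (real list \<Rightarrow> real) \<Rightarrow> real list \<Rightarrow> bool" where
  "perturbed_answers eps F N q as \<longleftrightarrow> length as = N \<and>
     (\<forall>i<N. \<exists>e1 e2. \<bar>e1\<bar> \<le> eps\<^sup>2 / 2 \<and> \<bar>e2\<bar> \<le> eps \<and>
                    as ! i = F (q (take i as) + e1) + e2)"

end

theory Submission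
  imports Defs
begin

lemma scc_basic:
  assumes "smooth_convex_cdf F"
  shows "mono F" "continuous_on UNIV F" "\<And>x. x \<le> 0 \<Longrightarrow> F x = 0" "\<And>x. x \<ge> 1 \<Longrightarrow> F x = 1"
  using assms unfolding smooth_convex_cdf_def by auto

lemma scc_range:
  assumes "smooth_convex_cdf F"
  shows "0 \<le> F x" "F x \<le> 1"
proof -
  have m: "mono F" using scc_basic[OF assms] by auto
  have "F (min x 0) \<le> F x" using m by (simp add: monoD)
  then show "0 \<le> F x" using scc_basic(3)[OF assms, of "min x 0"] by simp
  have "F x \<le> F (max x 1)" using m by (simp add: monoD)
  then show "F x \<le> 1" using scc_basic(4)[OF assms, of "max x 1"] by simp
qed

lemma scc_chord:
  assumes "smooth_convex_cdf F" "0 \<le> x1" "x1 < x2" "x2 < x3" "x3 \<le> 1"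
  shows "(F x2 - F x1) * (x3 - x1) \<le> (F x3 - F x1) * (x2 - x1)"
proof -
  obtain f f' where d: "\<forall>x\<in>{0..1}. (F has_real_derivative f x) (at x within {0..1})"
     and mf: "mono_on {0..1} f"
    using assms(1) unfolding smooth_convex_cdf_def by blast
  have cont: "continuous_on {a..b} F" for a b
    using scc_basic(2)[OF assms(1)] continuous_on_subset by blast
  have dat: "(F has_real_derivative f x) (at x)" if "0 < x" "x < 1" for x
  proof -
    have "(F has_real_derivative f x) (at x within {0..1})" using d that by auto
    moreover have "x \<in> interior {0..1::real}" using that by auto
    ultimately show ?thesis
      by (metis at_within_interior)
  qed
  have mvt: "\<exists>z. a < z \<and> z < b \<and> F b - F a = (b - a) * f z" if "0 \<le> a" "a < b" "b \<le> 1" for a b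
  proof -
    have "F differentiable (at x)" if "a < x" "x < b" for x
      using dat[of x] that \<open>0 \<le> a\<close> \<open>b \<le> 1\<close> real_differentiable_def by force
    then obtain l z where "a < z" "z < b" "DERIV F z :> l" "F b - F a = (b - a) * l"
      using MVT[OF \<open>a<b\<close> cont] by blast
    moreover have "DERIV F z :> f z" using dat \<open>a<z\<close> \<open>z<b\<close> that by auto
    ultimately have "l = f z" using DERIV_unique by blast
    then show ?thesis using \<open>a < z\<close> \<open>z < b\<close> \<open>F b - F a = (b - a) * l\<close> by blast
  qed
  obtain z1 where z1: "x1 < z1" "z1 < x2" "F x2 - F x1 = (x2 - x1) * f z1" using mvt[of x1 x2] assms by auto
  obtain z2 where z2: "x2 < z2" "z2 < x3" "F x3 - F x2 = (x3 - x2) * f z2" using mvt[of x2 x3] assms by auto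
  have "f z1 \<le> f z2" using mf z1 z2 assms by (intro mono_onD[OF mf]) auto
  then have "(F x2 - F x1) * (x3 - x2) \<le> (F x3 - F x2) * (x2 - x1)"
    using z1 z2 assms by (simp add: mult_left_mono)
  then show ?thesis by (simp add: algebra_simps)
qed

definition phi :: "(real \<Rightarrow> real) \<Rightarrow> real \<Rightarrow> real" where "phi F x = x + F x"
definition Xi :: "(real \<Rightarrow> real) \<Rightarrow> real \<Rightarrow> real" where "Xi F u = (THE x. phi F x = u)"

lemma phi_strict:
  assumes "smooth_convex_cdf F" "x < y" shows "phi F x < phi F y"
proof -
  have "F x \<le> F y" using scc_basic(1)[OF assms(1)] assms(2) by (simp add: monoD)
  then show ?thesis using assms(2) unfolding phi_def by simp
qed

lemma phi_ex:
  assumes "smooth_convex_cdf F" shows "\<exists>x. phi F x = u"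
proof -
  have cF: "continuous_on {u-1..u} F"
    using scc_basic(2)[OF assms] continuous_on_subset by blast
  have c: "continuous_on {u-1..u} (phi F)" unfolding phi_def
    by (intro continuous_on_add continuous_on_id cF)
  have "phi F (u-1) \<le> u" "u \<le> phi F u" unfolding phi_def using scc_range[OF assms] by auto
  from IVT'[OF this _ c] show ?thesis by auto
qed

lemma phi_Xi: assumes "smooth_convex_cdf F" shows "phi F (Xi F u) = u"
proof -
  obtain x where x: "phi F x = u" using phi_ex[OF assms] by blast
  have uq: "y = x" if "phi F y = u" for y
  proof (rule ccontr)
    assume "y \<noteq> x"
    then have "y < x \<or> x < y" by linarith
    moreover have "\<not> y < x" using phi_strict[OF assms, of y x] x that by linarith
    moreover have "\<not> x < y" using phi_strict[OF assms, of x y] x that by linarith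
    ultimately show False by blast
  qed
  have "Xi F u = x" unfolding Xi_def
    by (rule the_equality[of "\<lambda>y. phi F y = u", OF x uq])
  then show ?thesis using x by simp
qed

lemma Xi_phi: assumes "smooth_convex_cdf F" shows "Xi F (phi F x) = x"
proof (rule ccontr)
  assume "Xi F (phi F x) \<noteq> x"
  then have "Xi F (phi F x) < x \<or> x < Xi F (phi F x)" by auto
  then show False using phi_Xi[OF assms, of "phi F x"] phi_strict[OF assms, of "Xi F (phi F x)" x] phi_strict[OF assms, of x "Xi F (phi F x)"] by auto
qed

lemma Xi_mono: assumes "smooth_convex_cdf F" "u \<le> v" shows "Xi F u \<le> Xi F v"
proof (rule ccontr)
  assume "\<not> Xi F u \<le> Xi F v"
  then have "phi F (Xi F v) < phi F (Xi F u)" using phi_strict[OF assms(1)] by auto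
  then show False using phi_Xi[OF assms(1)] assms(2) by simp
qed

lemma Xi_strict: assumes "smooth_convex_cdf F" "u < v" shows "Xi F u < Xi F v"
proof -
  have "Xi F u \<noteq> Xi F v" using phi_Xi[OF assms(1), of u] phi_Xi[OF assms(1), of v] assms(2) by auto
  then show ?thesis using Xi_mono[OF assms(1), of u v] assms(2) by simp
qed

lemma Xi_lip: assumes "smooth_convex_cdf F" "u \<le> v" shows "Xi F v - Xi F u \<le> v - u"
proof -
  have "F (Xi F u) \<le> F (Xi F v)" using Xi_mono[OF assms] scc_basic(1)[OF assms(1)] by (simp add: monoD)
  then show ?thesis using phi_Xi[OF assms(1), of u] phi_Xi[OF assms(1), of v] unfolding phi_def by linarith
qed

lemma Xi_low: assumes "smooth_convex_cdf F" "u \<le> 0" shows "Xi F u = u"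
  using Xi_phi[OF assms(1), of u] scc_basic(3)[OF assms(1)] assms(2) unfolding phi_def by simp

lemma Xi_high: assumes "smooth_convex_cdf F" "u \<ge> 2" shows "Xi F u = u - 1"
  using Xi_phi[OF assms(1), of "u-1"] scc_basic(4)[OF assms(1), of "u-1"] assms(2) unfolding phi_def by simp

lemma Xi_range: assumes "smooth_convex_cdf F" "0 \<le> u" "u \<le> 2" shows "0 \<le> Xi F u" "Xi F u \<le> 1"
  using Xi_mono[OF assms(1) assms(2)] Xi_mono[OF assms(1) assms(3)] Xi_low[OF assms(1), of 0] Xi_high[OF assms(1), of 2]
  by auto

lemma Xi_conc:
  assumes "smooth_convex_cdf F" "0 \<le> u1" "u1 < u2" "u2 < u3" "u3 \<le> 2"
  shows "(Xi F u3 - Xi F u1) * (u2 - u1) \<le> (Xi F u2 - Xi F u1) * (u3 - u1)"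
proof -
  define x1 x2 x3 where "x1 = Xi F u1" "x2 = Xi F u2" "x3 = Xi F u3"
  have o: "0 \<le> x1" "x1 < x2" "x2 < x3" "x3 \<le> 1" unfolding x1_x2_x3_def
    using Xi_strict[OF assms(1)] Xi_range[OF assms(1)] assms by auto
  have u: "u1 = x1 + F x1" "u2 = x2 + F x2" "u3 = x3 + F x3"
    using phi_Xi[OF assms(1)] unfolding x1_x2_x3_def phi_def by auto
  have "(F x2 - F x1) * (x3 - x1) \<le> (F x3 - F x1) * (x2 - x1)" using scc_chord[OF assms(1) o] .
  then have "(x3 - x1) * (u2 - u1) \<le> (x2 - x1) * (u3 - u1)"
    by (simp only: u) (simp add: algebra_simps)
  then show ?thesis by (simp only: x1_x2_x3_def)
qed

definition bs_step :: "real \<Rightarrow> real \<times> real \<Rightarrow> real \<Rightarrow> real \<times> real" where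
  "bs_step u lh a = (if (fst lh + snd lh) / 2 + a \<ge> u then (fst lh, (fst lh + snd lh) / 2)
                     else ((fst lh + snd lh) / 2, snd lh))"

definition bs :: "real \<Rightarrow> real list \<Rightarrow> real \<times> real" where
  "bs u l = foldl (bs_step u) (0, 1) l"

definition bsq :: "real \<Rightarrow> real list \<Rightarrow> real" where
  "bsq u l = (fst (bs u l) + snd (bs u l)) / 2"

lemma bs_snoc: "bs u (l @ [a]) = bs_step u (bs u l) a"
  unfolding bs_def by simp

lemma bs_inv:
  assumes F: "smooth_convex_cdf F" and u: "0 \<le> u" "u \<le> 2" and eps: "0 < eps"
    and ans: "\<forall>s<length l. \<exists>e1 e2. \<bar>e1\<bar> \<le> eps\<^sup>2 / 2 \<and> \<bar>e2\<bar> \<le> eps \<and>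
                 l ! s = F (bsq u (take s l) + e1) + e2"
  shows "s \<le> length l \<Longrightarrow> snd (bs u (take s l)) - fst (bs u (take s l)) = 1 / 2 ^ s \<and>
           Xi F u \<le> snd (bs u (take s l)) + (eps + eps\<^sup>2) \<and>
           fst (bs u (take s l)) - (eps + eps\<^sup>2) \<le> Xi F u"
proof (induction s)
  case 0
  have e2: "0 \<le> eps\<^sup>2" by simp
  have b0: "bs u (take 0 l) = (0, 1)" by (simp add: bs_def)
  have "Xi F u \<le> 1 + (eps + eps\<^sup>2)" "0 - (eps + eps\<^sup>2) \<le> Xi F u"
    using Xi_range[OF F u] eps e2 by linarith+
  then show ?case unfolding b0 by simp
next
  case (Suc s)
  then have s: "s < length l" by simp
  have IH: "snd (bs u (take s l)) - fst (bs u (take s l)) = 1 / 2 ^ s"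
       "Xi F u \<le> snd (bs u (take s l)) + (eps + eps\<^sup>2)"
       "fst (bs u (take s l)) - (eps + eps\<^sup>2) \<le> Xi F u"
    using Suc.IH s by auto
  obtain e1 e2 where e: "\<bar>e1\<bar> \<le> eps\<^sup>2 / 2" "\<bar>e2\<bar> \<le> eps"
     and ls: "l ! s = F (bsq u (take s l) + e1) + e2"
    using ans s by blast
  define lo where "lo = fst (bs u (take s l))"
  define hi where "hi = snd (bs u (take s l))"
  define m where "m = (lo + hi) / 2"
  have mq: "bsq u (take s l) = m" unfolding bsq_def m_def lo_def hi_def by simp
  have tk: "take (Suc s) l = take s l @ [l ! s]" using s by (simp add: take_Suc_conv_app_nth)
  have eq: "bs u (take (Suc s) l) = (if m + l ! s \<ge> u then (lo, m) else (m, hi))"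
    unfolding tk bs_snoc bs_step_def m_def lo_def hi_def by simp
  have ph: "phi F (m + e1) = m + e1 + l ! s - e2" unfolding phi_def ls mq by simp
  have eb: "- (eps\<^sup>2 / 2) \<le> e1" "e1 \<le> eps\<^sup>2 / 2" "- eps \<le> e2" "e2 \<le> eps"
    using e by (auto simp: abs_le_iff)
  show ?case
  proof (cases "m + l ! s \<ge> u")
    case True
    define g where "g = eps\<^sup>2 / 2 + eps"
    have g0: "0 \<le> g" unfolding g_def using eps by (simp add: add_nonneg_nonneg)
    have "u - g \<le> phi F (m + e1)" using ph True eb unfolding g_def by linarith
    then have "Xi F (u - g) \<le> m + e1" using Xi_mono[OF F] Xi_phi[OF F] by metis
    moreover have "Xi F u - Xi F (u - g) \<le> g" using Xi_lip[OF F, of "u - g" u] g0 by simp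
    ultimately have "Xi F u \<le> m + (eps + eps\<^sup>2)" using eb unfolding g_def by linarith
    then show ?thesis using eq True IH unfolding lo_def[symmetric] hi_def[symmetric] m_def
      by (simp add: field_simps)
  next
    case False
    define g where "g = eps\<^sup>2 / 2 + eps"
    have g0: "0 \<le> g" unfolding g_def using eps by (simp add: add_nonneg_nonneg)
    have "phi F (m + e1) \<le> u + g" using ph False eb unfolding g_def by linarith
    then have "m + e1 \<le> Xi F (u + g)" using Xi_mono[OF F] Xi_phi[OF F] by metis
    moreover have "Xi F (u + g) - Xi F u \<le> g" using Xi_lip[OF F, of u "u + g"] g0 by simp
    ultimately have "m - (eps + eps\<^sup>2) \<le> Xi F u" using eb unfolding g_def by linarith
    then show ?thesis using eq False IH unfolding lo_def[symmetric] hi_def[symmetric] m_def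
      by (simp add: field_simps)
  qed
qed

lemma bs_final:
  assumes F: "smooth_convex_cdf F" and u: "0 \<le> u" "u \<le> 2" and eps: "0 < eps" "eps < 1"
    and L: "1 / eps \<le> 2 ^ L" and len: "length l = L"
    and ans: "\<forall>s<length l. \<exists>e1 e2. \<bar>e1\<bar> \<le> eps\<^sup>2 / 2 \<and> \<bar>e2\<bar> \<le> eps \<and>
                 l ! s = F (bsq u (take s l) + e1) + e2"
  shows "\<bar>fst (bs u l) - Xi F u\<bar> \<le> 3 * eps"
proof -
  have h: "snd (bs u l) - fst (bs u l) = 1 / 2 ^ L \<and> Xi F u \<le> snd (bs u l) + (eps + eps\<^sup>2) \<and>
           fst (bs u l) - (eps + eps\<^sup>2) \<le> Xi F u"
    using bs_inv[OF F u eps(1) ans, of L] len by simp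
  have "1 / 2 ^ L \<le> eps" using L eps by (simp add: field_simps)
  moreover have "eps\<^sup>2 \<le> eps" using eps by (simp add: power2_eq_square)
  ultimately show ?thesis using h by (simp add: abs_le_iff)
qed

lemma chord_below:
  assumes F: "smooth_convex_cdf F" and ab: "0 \<le> a" "a < b" "b \<le> 2" and u: "a \<le> u" "u \<le> b"
  shows "Xi F a + (Xi F b - Xi F a) * (u - a) / (b - a) \<le> Xi F u"
proof (cases "u = a \<or> u = b")
  case True then show ?thesis using ab by auto
next
  case False
  then have "a < u" "u < b" using u by auto
  then have "(Xi F b - Xi F a) * (u - a) \<le> (Xi F u - Xi F a) * (b - a)"
    using Xi_conc[OF F] ab by auto
  then have "(Xi F b - Xi F a) * (u - a) / (b - a) \<le> Xi F u - Xi F a"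
    using ab by (simp add: divide_le_eq)
  then show ?thesis by simp
qed

lemma chord_above:
  assumes F: "smooth_convex_cdf F" and ab: "0 \<le> a" "a < b" "b \<le> 2" and u: "a \<le> u" "u \<le> b"
    and m: "m = (a + b) / 2"
  shows "Xi F u \<le> Xi F a + (Xi F b - Xi F a) * (u - a) / (b - a) + 2 * (Xi F m - (Xi F a + Xi F b) / 2)"
proof -
  define c where "c v = Xi F a + (Xi F b - Xi F a) * (v - a) / (b - a)" for v
  define g where "g v = Xi F v - c v" for v
  have ca: "c a = Xi F a" and cb: "c b = Xi F b" using ab unfolding c_def by auto
  have cm: "c m = (Xi F a + Xi F b) / 2" using ab unfolding c_def m by (simp add: field_simps)
  have D: "g m = Xi F m - (Xi F a + Xi F b) / 2" unfolding g_def cm ..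
  have D0: "0 \<le> g m" using chord_below[OF F ab, of m] ab unfolding g_def c_def m by simp
  have lin: "c v - c w = (Xi F b - Xi F a) * (v - w) / (b - a)" for v w
    unfolding c_def by (simp add: diff_divide_distrib[symmetric] right_diff_distrib)
  have "g u \<le> 2 * g m"
  proof -
    consider "u = a" | "u = b" | "a < u" "u \<le> m" | "m < u" "u < b" using u m by linarith
    then show ?thesis
    proof cases
      case 1 then show ?thesis using D0 ca unfolding g_def by simp
    next
      case 2 then show ?thesis using D0 cb unfolding g_def by simp
    next
      case 3
      show ?thesis
      proof (cases "u = m")
        case True then show ?thesis using D0 by simp
      next
        case False
        then have um: "u < m" using 3 by simp
        have mb: "m < b" using ab m by simp
        have "(Xi F b - Xi F u) * (m - u) \<le> (Xi F m - Xi F u) * (b - u)"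
          using Xi_conc[OF F, of u m b] 3 um mb ab by simp
        moreover have "Xi F b - Xi F u = g b - g u + (c b - c u)" "Xi F m - Xi F u = g m - g u + (c m - c u)"
          unfolding g_def by simp_all
        moreover have "(c b - c u) * (m - u) = (c m - c u) * (b - u)"
          unfolding lin using ab by (simp add: field_simps)
        moreover have "g b = 0" unfolding g_def cb by simp
        ultimately have "(- g u) * (m - u) \<le> (g m - g u) * (b - u)"
          by (simp add: algebra_simps)
        then have "g u * (b - m) \<le> g m * (b - u)" by (simp add: algebra_simps)
        moreover have "b - u \<le> 2 * (b - m)" using 3 m by simp
        moreover have "0 < b - m" using mb by simp
        ultimately have "g m * (b - u) \<le> g m * (2 * (b - m))" "g u * (b - m) \<le> g m * (b - u)" "0 < b - m"
          using D0 by (auto intro: mult_left_mono)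
        then have "g u * (b - m) \<le> (2 * g m) * (b - m)" by (simp only: mult.assoc mult.commute[of 2])
        then show ?thesis using \<open>0 < b - m\<close> by (simp only: mult_le_cancel_right_pos)
      qed
    next
      case 4
      have am: "a < m" using ab m by simp
      have "(Xi F u - Xi F a) * (m - a) \<le> (Xi F m - Xi F a) * (u - a)"
        using Xi_conc[OF F, of a m u] 4 am ab by simp
      moreover have "Xi F u - Xi F a = g u - g a + (c u - c a)" "Xi F m - Xi F a = g m - g a + (c m - c a)"
        unfolding g_def by simp_all
      moreover have "(c u - c a) * (m - a) = (c m - c a) * (u - a)"
        unfolding lin using ab by (simp add: field_simps)
      moreover have "g a = 0" unfolding g_def ca by simp
      ultimately have "g u * (m - a) \<le> g m * (u - a)"
        by (simp add: algebra_simps)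
      moreover have "u - a \<le> 2 * (m - a)" using 4 m by simp
      moreover have "0 < m - a" using am by simp
      ultimately have "g m * (u - a) \<le> g m * (2 * (m - a))" "g u * (m - a) \<le> g m * (u - a)" "0 < m - a"
        using D0 by (auto intro: mult_left_mono)
      then have "g u * (m - a) \<le> (2 * g m) * (m - a)" by (simp only: mult.assoc mult.commute[of 2])
      then show ?thesis using \<open>0 < m - a\<close> by (simp only: mult_le_cancel_right_pos)
    qed
  qed
  moreover have "c m = Xi F a + (Xi F b - Xi F a) * (m - a) / (b - a)" unfolding c_def ..
  ultimately show ?thesis using cm unfolding g_def c_def by (smt (verit))
qed

lemma piece_ok:
  assumes F: "smooth_convex_cdf F" and ab: "0 \<le> a" "a < b" "b \<le> 2" and u: "a \<le> u" "u \<le> b"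
    and m: "m = (a + b) / 2"
    and ea: "\<bar>xa - Xi F a\<bar> \<le> \<delta>" and em: "\<bar>xm - Xi F m\<bar> \<le> \<delta>" and eb: "\<bar>xb - Xi F b\<bar> \<le> \<delta>"
    and t: "xm - (xa + xb) / 2 \<le> thr"
  shows "\<bar>Xi F u - (xa + (xb - xa) * (u - a) / (b - a))\<bar> \<le> \<delta> + 2 * (thr + 2 * \<delta>)"
proof -
  define s where "s = (u - a) / (b - a)"
  have s01: "0 \<le> s" "s \<le> 1" using ab u unfolding s_def by (auto simp: divide_le_eq)
  have lo: "Xi F a + (Xi F b - Xi F a) * s \<le> Xi F u" using chord_below[OF F ab u] unfolding s_def by simp
  have hi: "Xi F u \<le> Xi F a + (Xi F b - Xi F a) * s + 2 * (Xi F m - (Xi F a + Xi F b) / 2)"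
    using chord_above[OF F ab u m] unfolding s_def by simp
  have dv: "Xi F m - (Xi F a + Xi F b) / 2 \<le> thr + 2 * \<delta>" using ea em eb t unfolding abs_le_iff add_divide_distrib by linarith
  have "\<bar>(xa + (xb - xa) * s) - (Xi F a + (Xi F b - Xi F a) * s)\<bar>
        = \<bar>(1 - s) * (xa - Xi F a) + s * (xb - Xi F b)\<bar>" by (simp add: algebra_simps)
  also have "\<dots> \<le> \<bar>(1 - s) * (xa - Xi F a)\<bar> + \<bar>s * (xb - Xi F b)\<bar>" by (rule abs_triangle_ineq)
  also have "\<dots> = (1 - s) * \<bar>xa - Xi F a\<bar> + s * \<bar>xb - Xi F b\<bar>"
    using s01 by (simp add: abs_mult)
  also have "\<dots> \<le> (1 - s) * \<delta> + s * \<delta>"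
    using s01 ea eb by (intro add_mono mult_left_mono) auto
  also have "\<dots> = \<delta>" by (simp add: algebra_simps)
  finally have ch: "\<bar>(xa + (xb - xa) * s) - (Xi F a + (Xi F b - Xi F a) * s)\<bar> \<le> \<delta>" .
  have "(xa + (xb - xa) * (u - a) / (b - a)) = xa + (xb - xa) * s" unfolding s_def by simp
  then show ?thesis using lo hi dv ch unfolding abs_le_iff by (smt (verit))
qed

lemma dev_sum:
  assumes F: "smooth_convex_cdf F" and h: "0 < h" "real (2 * n) * h \<le> 2"
  shows "(\<Sum>i<n. Xi F (real (2*i+1) * h) - (Xi F (real (2*i) * h) + Xi F (real (2*i+2) * h)) / 2) \<le> h / 2"
proof -
  define D where "D k = Xi F (real (k+1) * h) - Xi F (real k * h)" for k
  have Dnn: "0 \<le> D k" for k unfolding D_def using Xi_mono[OF F, of "real k * h" "real (k+1) * h"] h by simp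
  have Dle: "D k \<le> h" for k unfolding D_def using Xi_lip[OF F, of "real k * h" "real (k+1) * h"] h
    by (simp add: algebra_simps)
  have Ddec: "D (k+1) \<le> D k" if "real (k+2) * h \<le> 2" for k
  proof -
    have "(Xi F (real (k+2) * h) - Xi F (real k * h)) * (real (k+1) * h - real k * h)
          \<le> (Xi F (real (k+1) * h) - Xi F (real k * h)) * (real (k+2) * h - real k * h)"
      using Xi_conc[OF F, of "real k * h" "real (k+1) * h" "real (k+2) * h"] h that
      by (simp add: algebra_simps)
    then have "(Xi F (real (k+2) * h) - Xi F (real k * h)) * h
          \<le> (Xi F (real (k+1) * h) - Xi F (real k * h)) * (2 * h)" by (simp add: algebra_simps)
    then have "Xi F (real (k+2) * h) - Xi F (real k * h) \<le> 2 * (Xi F (real (k+1) * h) - Xi F (real k * h))"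
      using h by (simp add: mult.commute mult.left_commute)
    then show ?thesis unfolding D_def by (simp add: algebra_simps add.commute)
  qed
  have tel: "n \<ge> 1 \<Longrightarrow> real (2 * n) * h \<le> 2 \<Longrightarrow> (\<Sum>i<n. D (2*i) - D (2*i+1)) \<le> D 0 - D (2*n - 1)" for n
  proof (induction n)
    case 0 then show ?case by simp
  next
    case (Suc n)
    show ?case
    proof (cases "n = 0")
      case True then show ?thesis by simp
    next
      case False
      have "real (2 * n) * h \<le> real (2 * Suc n) * h" using h by (intro mult_right_mono) auto
      then have "real (2 * n) * h \<le> 2" using Suc.prems(2) by linarith
      then have IH: "(\<Sum>i<n. D (2*i) - D (2*i+1)) \<le> D 0 - D (2*n - 1)"
        using False by (intro Suc.IH) auto
      have "D (2*n) \<le> D (2*n - 1)"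
        using Ddec[of "2*n - 1"] False Suc.prems h by (simp add: algebra_simps)
      then show ?thesis using IH by simp
    qed
  qed
  have eq: "Xi F (real (2*i+1) * h) - (Xi F (real (2*i) * h) + Xi F (real (2*i+2) * h)) / 2
            = (D (2*i) - D (2*i+1)) / 2" for i
    unfolding D_def by (simp add: algebra_simps)
  show ?thesis
  proof (cases "n = 0")
    case True then show ?thesis using h by simp
  next
    case False
    have "(\<Sum>i<n. (D (2*i) - D (2*i+1)) / 2) = (\<Sum>i<n. D (2*i) - D (2*i+1)) / 2"
      by (simp add: sum_divide_distrib)
    also have "\<dots> \<le> (D 0 - D (2*n - 1)) / 2" using tel[of n] False h by simp
    also have "\<dots> \<le> h / 2" using Dnn[of "2*n-1"] Dle[of 0] by simp
    finally show ?thesis unfolding eq .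
  qed
qed

fun nxt :: "nat \<Rightarrow> nat \<Rightarrow> (nat \<times> nat) option" where
  "nxt 0 i = None"
| "nxt (Suc j) i = (if even i then Some (Suc j, Suc i) else nxt j (i div 2))"

lemma even_Suc_div_pow:
  assumes "even (i::nat)" "k \<ge> 1" shows "Suc i div 2 ^ k = i div 2 ^ k"
proof -
  obtain k' where k: "k = Suc k'" using assms(2) by (cases k) auto
  have "Suc i div 2 = i div 2" using assms(1) by presburger
  have "Suc i div 2 ^ k = Suc i div 2 div 2 ^ k'" unfolding k by (simp add: div_mult2_eq)
  moreover have "i div 2 ^ k = i div 2 div 2 ^ k'" unfolding k by (simp add: div_mult2_eq)
  ultimately show ?thesis using \<open>Suc i div 2 = i div 2\<close> by simp
qed

lemma nxt_Some:
  "i < 2 ^ j \<Longrightarrow> nxt j i = Some (j', i') \<Longrightarrow>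
     j' \<le> j \<and> i' < 2 ^ j' \<and> (\<forall>j''<j'. i' div 2 ^ (j' - j'') = i div 2 ^ (j - j'')) \<and>
     real i' / 2 ^ j' = real (Suc i) / 2 ^ j"
proof (induction j i arbitrary: j' i' rule: nxt.induct)
  case (1 i)
  then show ?case by simp
next
  case (2 j i)
  show ?case
  proof (cases "even i")
    case True
    then have e: "j' = Suc j" "i' = Suc i" using 2 by auto
    have "odd (Suc i)" using True by simp
    moreover have "even (2 ^ Suc j :: nat)" by simp
    ultimately have "Suc i \<noteq> 2 ^ Suc j" by metis
    then have "Suc i < 2 ^ Suc j" using "2.prems"(1) by simp
    moreover have "Suc i div 2 ^ (Suc j - j'') = i div 2 ^ (Suc j - j'')" if "j'' < Suc j" for j''
      using even_Suc_div_pow[OF True, of "Suc j - j''"] that by simp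
    ultimately show ?thesis using e by simp
  next
    case False
    have n: "nxt j (i div 2) = Some (j', i')" using 2 False by simp
    have lt: "i div 2 < 2 ^ j" using "2.prems"(1) by simp
    have IH: "j' \<le> j \<and> i' < 2 ^ j' \<and> (\<forall>j''<j'. i' div 2 ^ (j' - j'') = i div 2 div 2 ^ (j - j'')) \<and>
     real i' / 2 ^ j' = real (Suc (i div 2)) / 2 ^ j"
      using "2.IH"[OF False lt n] .
    have a: "i div 2 div 2 ^ (j - j'') = i div 2 ^ (Suc j - j'')" if "j'' \<le> j" for j''
    proof -
      have "Suc j - j'' = Suc (j - j'')" using that by simp
      then show ?thesis by (simp add: div_mult2_eq)
    qed
    have b: "real (Suc (i div 2)) / 2 ^ j = real (Suc i) / 2 ^ Suc j"
    proof -
      have "Suc i = 2 * Suc (i div 2)" using False by presburger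
      then have "real (Suc i) = 2 * real (Suc (i div 2))" by (metis of_nat_mult of_nat_numeral)
      then show ?thesis by (simp add: field_simps)
    qed
    show ?thesis using IH a b by auto
  qed
qed

lemma nxt_None: "i < 2 ^ j \<Longrightarrow> nxt j i = None \<Longrightarrow> Suc i = 2 ^ j"
proof (induction j i rule: nxt.induct)
  case (1 i) then show ?case by simp
next
  case (2 j i)
  then have odd: "odd i" by (auto split: if_splits)
  then have "nxt j (i div 2) = None" using 2 by simp
  then have "Suc (i div 2) = 2 ^ j" using 2 odd by simp
  moreover have "Suc i = 2 * Suc (i div 2)" using odd by presburger
  ultimately show ?case by simp
qed

definition evpt :: "nat \<Rightarrow> nat \<Rightarrow> nat \<Rightarrow> real" where
  "evpt j i e = real (2 * i + e) / 2 ^ j"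

type_synonym state = "(nat \<times> nat) option \<times> (real \<times> real \<times> real \<times> real) list"

definition tstep :: "nat \<Rightarrow> real \<Rightarrow> state \<Rightarrow> real list \<Rightarrow> state" where
  "tstep L thr st blk = (case fst st of None \<Rightarrow> st | Some (j, i) \<Rightarrow>
     (let xa = fst (bs (evpt j i 0) (take L blk));
          xm = fst (bs (evpt j i 1) (take L (drop L blk)));
          xb = fst (bs (evpt j i 2) (take L (drop (2 * L) blk)))
      in if xm - (xa + xb) / 2 > thr then (Some (Suc j, 2 * i), snd st)
         else (nxt j i, snd st @ [(evpt j i 0, evpt j i 2, xa, xb)])))"

fun run :: "nat \<Rightarrow> real \<Rightarrow> nat \<Rightarrow> real list \<Rightarrow> state" where
  "run L thr 0 as = (Some (0, 0), [])"
| "run L thr (Suc t) as = tstep L thr (run L thr t as) (take (3 * L) (drop (3 * L * t) as))"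

definition qry :: "nat \<Rightarrow> real \<Rightarrow> real list \<Rightarrow> real" where
  "qry L thr pre = (let n = length pre; t = n div (3 * L); e = (n mod (3 * L)) div L in
     case fst (run L thr t pre) of None \<Rightarrow> 0
     | Some (j, i) \<Rightarrow> bsq (evpt j i e) (drop (3 * L * t + L * e) pre))"

definition chord :: "real \<times> real \<times> real \<times> real \<Rightarrow> real \<Rightarrow> real" where
  "chord p u = (case p of (a, b, xa, xb) \<Rightarrow> xa + (xb - xa) * (u - a) / (b - a))"

definition Xh :: "(real \<times> real \<times> real \<times> real) list \<Rightarrow> real \<Rightarrow> real" where
  "Xh ps u = (if u \<le> 0 then u else if 2 \<le> u then u - 1 else
     (if \<exists>p\<in>set ps. fst p \<le> u \<and> u \<le> fst (snd p)
      then chord (SOME p. p \<in> set ps \<and> fst p \<le> u \<and> u \<le> fst (snd p)) u else 0))"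

definition outG :: "(real \<times> real \<times> real \<times> real) list \<Rightarrow> real \<Rightarrow> real" where
  "outG ps v = Sup {u. Xh ps u \<le> v} - v"

lemma run_prefix:
  "take (3 * L * t) xs = take (3 * L * t) ys \<Longrightarrow> run L thr t xs = run L thr t ys"
proof (induction t)
  case 0 then show ?case by simp
next
  case (Suc t)
  have le: "3 * L * t \<le> 3 * L * Suc t" by simp
  have "take (3 * L * t) xs = take (3 * L * t) ys"
    using Suc.prems by (metis le min.absorb1 take_take)
  moreover have "take (3 * L) (drop (3 * L * t) xs) = take (3 * L) (drop (3 * L * t) ys)"
    using Suc.prems by (simp add: take_drop add.commute)
  ultimately show ?case using Suc.IH by simp
qed

lemma div_block:
  fixes L t r :: nat
  assumes "r < 3 * L" shows "(3 * L * t + r) div (3 * L) = t" "(3 * L * t + r) mod (3 * L) = r"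
proof -
  have "3 * L \<noteq> 0" using assms by simp
  then show "(3 * L * t + r) div (3 * L) = t" "(3 * L * t + r) mod (3 * L) = r"
    using assms by (simp_all add: add.commute mult.commute)
qed

lemma div_block2:
  fixes L e s :: nat
  assumes "s < L" shows "(L * e + s) div L = e"
proof -
  have "L \<noteq> 0" using assms by simp
  then show ?thesis using assms by (simp add: add.commute mult.commute)
qed

locale alg =
  fixes eps :: real and F :: "real \<Rightarrow> real" and as :: "real list" and L T :: nat
  assumes F: "smooth_convex_cdf F" and e0: "0 < eps" and e1: "eps < 1"
    and L: "1 / eps \<le> 2 ^ L" and L1: "1 \<le> L"
    and P: "perturbed_answers eps F (3 * L * T) (qry L (12 * eps)) as"
begin

abbreviation R where "R t \<equiv> run L (12 * eps) t as"

lemma len: "length as = 3 * L * T" using P unfolding perturbed_answers_def by simp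

lemma ans: "i < 3 * L * T \<Longrightarrow> \<exists>e1 e2. \<bar>e1\<bar> \<le> eps\<^sup>2 / 2 \<and> \<bar>e2\<bar> \<le> eps \<and>
    as ! i = F (qry L (12 * eps) (take i as) + e1) + e2"
  using P unfolding perturbed_answers_def by simp

lemma evpt_range:
  assumes "i < 2 ^ j" "e \<le> 2" shows "0 \<le> evpt j i e" "evpt j i e \<le> 2"
proof -
  have "2 * i + e \<le> 2 * 2 ^ j" using assms by simp
  then have "real (2 * i + e) \<le> 2 * 2 ^ j" by (metis of_nat_le_iff of_nat_mult of_nat_numeral of_nat_power)
  then show "evpt j i e \<le> 2" unfolding evpt_def by (simp add: divide_le_eq)
  show "0 \<le> evpt j i e" unfolding evpt_def by simp
qed

lemma est:
  assumes t: "t < T" and st: "fst (R t) = Some (j, i)" and i: "i < 2 ^ j" and e: "e \<le> 2"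
  shows "\<bar>fst (bs (evpt j i e) (take L (drop (3 * L * t + L * e) as))) - Xi F (evpt j i e)\<bar> \<le> 3 * eps"
proof -
  define p0 where "p0 = 3 * L * t + L * e"
  define l where "l = take L (drop p0 as)"
  define u where "u = evpt j i e"
  have "L * e + L \<le> 3 * L" proof -
    have "L * e \<le> L * 2" using e by (intro mult_le_mono2)
    then show ?thesis by linarith
  qed
  moreover have "3 * L * t + 3 * L \<le> 3 * L * T"
  proof -
    have "3 * L * Suc t \<le> 3 * L * T" using t by (intro mult_le_mono2) simp
    then show ?thesis by simp
  qed
  ultimately have p0L: "p0 + L \<le> 3 * L * T" unfolding p0_def by linarith
  have lenl: "length l = L" unfolding l_def using len p0L by simp
  have A: "\<forall>s<length l. \<exists>e1 e2. \<bar>e1\<bar> \<le> eps\<^sup>2 / 2 \<and> \<bar>e2\<bar> \<le> eps \<and> l ! s = F (bsq u (take s l) + e1) + e2"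
  proof (intro allI impI)
    fix s assume "s < length l"
    then have s: "s < L" using lenl by simp
    have n: "p0 + s < 3 * L * T" using p0L s by linarith
    obtain e1 e2 where ee: "\<bar>e1\<bar> \<le> eps\<^sup>2 / 2" "\<bar>e2\<bar> \<le> eps"
      and an: "as ! (p0 + s) = F (qry L (12 * eps) (take (p0 + s) as) + e1) + e2"
      using ans[OF n] by blast
    have ls: "l ! s = as ! (p0 + s)" unfolding l_def using s p0L len by (simp add: nth_drop)
    have q: "qry L (12 * eps) (take (p0 + s) as) = bsq u (take s l)"
    proof -
      have lt: "length (take (p0 + s) as) = p0 + s" using n len by simp
      have r: "L * e + s < 3 * L" using s \<open>L * e + L \<le> 3 * L\<close> by linarith
      have "p0 + s = 3 * L * t + (L * e + s)" by (simp add: p0_def)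
      then have dv: "(p0 + s) div (3 * L) = t" "(p0 + s) mod (3 * L) = L * e + s"
        using div_block[OF r, of t] by (simp_all only:)
      have dv2: "(L * e + s) div L = e" using div_block2[OF s] .
      have "3 * L * t \<le> p0 + s" unfolding p0_def by simp
      then have "take (3 * L * t) (take (p0 + s) as) = take (3 * L * t) as" by (simp add: min.absorb1)
      then have rp: "run L (12 * eps) t (take (p0 + s) as) = R t" by (rule run_prefix)
      have dr: "drop (3 * L * t + L * e) (take (p0 + s) as) = take s l"
        unfolding l_def p0_def using s by (simp add: drop_take take_take min.absorb1)
      show ?thesis unfolding qry_def Let_def lt dv dv2 rp st u_def dr by simp
    qed
    show "\<exists>e1 e2. \<bar>e1\<bar> \<le> eps\<^sup>2 / 2 \<and> \<bar>e2\<bar> \<le> eps \<and> l ! s = F (bsq u (take s l) + e1) + e2"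
      using ee an ls q by metis
  qed
  have "\<bar>fst (bs u l) - Xi F u\<bar> \<le> 3 * eps"
    using bs_final[OF F evpt_range[OF i e] e0 e1 L lenl A[unfolded u_def]] unfolding u_def .
  then show ?thesis unfolding l_def u_def p0_def .
qed

lemma blk:
  assumes "e \<le> 2"
  shows "take L (drop (L * e) (take (3 * L) (drop (3 * L * t) as))) = take L (drop (3 * L * t + L * e) as)"
proof -
  have "L * e + L \<le> 3 * L" proof -
    have "L * e \<le> L * 2" using assms by (intro mult_le_mono2)
    then show ?thesis by linarith
  qed
  then have "min L (3 * L - L * e) = L" by linarith
  then show ?thesis by (simp add: drop_take take_take add.commute)
qed

end

definition dev :: "(real \<Rightarrow> real) \<Rightarrow> nat \<Rightarrow> nat \<Rightarrow> real" where
  "dev F j i = Xi F (evpt j i 1) - (Xi F (evpt j i 0) + Xi F (evpt j i 2)) / 2"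

definition FailT :: "(real \<Rightarrow> real) \<Rightarrow> real \<Rightarrow> (nat \<times> nat) set" where
  "FailT F eps = {(j, i). i < 2 ^ j \<and> dev F j i > 6 * eps}"

definition good :: "(real \<Rightarrow> real) \<Rightarrow> real \<Rightarrow> real \<times> real \<times> real \<times> real \<Rightarrow> bool" where
  "good F eps p = (0 \<le> fst p \<and> fst p < fst (snd p) \<and> fst (snd p) \<le> 2 \<and>
      (\<forall>u. fst p \<le> u \<and> u \<le> fst (snd p) \<longrightarrow> \<bar>Xi F u - chord p u\<bar> \<le> 39 * eps))"

fun posn :: "(nat \<times> nat) option \<Rightarrow> real" where
  "posn None = 2"
| "posn (Some (j, i)) = evpt j i 0"

definition Inv :: "(real \<Rightarrow> real) \<Rightarrow> real \<Rightarrow> state \<Rightarrow> bool" where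
  "Inv F eps st = ((\<forall>p\<in>set (snd st). good F eps p) \<and>
     (\<forall>u. 0 < u \<and> u \<le> posn (fst st) \<longrightarrow> (\<exists>p\<in>set (snd st). fst p \<le> u \<and> u \<le> fst (snd p))) \<and>
     (case fst st of None \<Rightarrow> True
      | Some (j, i) \<Rightarrow> i < 2 ^ j \<and> (\<forall>j'<j. (j', i div 2 ^ (j - j')) \<in> FailT F eps)))"

definition keylt :: "real \<times> nat \<Rightarrow> real \<times> nat \<Rightarrow> bool" where
  "keylt x y = (fst x < fst y \<or> (fst x = fst y \<and> snd x < snd y))"

lemma keylt_trans: "keylt x y \<Longrightarrow> keylt y z \<Longrightarrow> keylt x z"
  unfolding keylt_def by auto

lemma keylt_irrefl: "\<not> keylt x x"
  unfolding keylt_def by auto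

lemma evpt_rel: "evpt j i 1 = (evpt j i 0 + evpt j i 2) / 2" "evpt j i 0 < evpt j i 2"
  "evpt (Suc j) (2 * i) 0 = evpt j i 0"
  unfolding evpt_def by (simp_all add: field_simps)

lemma Inv_init: "Inv F eps (Some (0, 0), [])"
  unfolding Inv_def by (simp add: evpt_def)

context alg
begin

lemma step:
  assumes t: "t < T" and I: "Inv F eps (R t)"
  shows "Inv F eps (R (Suc t))" "fst (R t) = None \<Longrightarrow> fst (R (Suc t)) = None"
    "fst (R t) = Some (j, i) \<Longrightarrow> fst (R (Suc t)) = Some (j', i') \<Longrightarrow>
       keylt (evpt j i 0, j) (evpt j' i' 0, j')"
proof -
  define blk where "blk = take (3 * L) (drop (3 * L * t) as)"
  have RS: "R (Suc t) = tstep L (12 * eps) (R t) blk" unfolding blk_def by simp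
  have case_none: "fst (R t) = None \<Longrightarrow> R (Suc t) = R t" unfolding RS tstep_def by simp
  have main: "Inv F eps (R (Suc t)) \<and> (\<forall>j' i'. fst (R (Suc t)) = Some (j', i') \<longrightarrow>
       keylt (evpt j i 0, j) (evpt j' i' 0, j'))" if st: "fst (R t) = Some (j, i)" for j i
  proof -
    have I1: "\<forall>p\<in>set (snd (R t)). good F eps p"
      and I2: "\<forall>u. 0 < u \<and> u \<le> evpt j i 0 \<longrightarrow> (\<exists>p\<in>set (snd (R t)). fst p \<le> u \<and> u \<le> fst (snd p))"
      and I3: "i < 2 ^ j" and I4: "\<forall>j'<j. (j', i div 2 ^ (j - j')) \<in> FailT F eps"
      using I st unfolding Inv_def by auto
    define xa where "xa = fst (bs (evpt j i 0) (take L blk))"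
    define xm where "xm = fst (bs (evpt j i 1) (take L (drop L blk)))"
    define xb where "xb = fst (bs (evpt j i 2) (take L (drop (2 * L) blk)))"
    have ea: "\<bar>xa - Xi F (evpt j i 0)\<bar> \<le> 3 * eps"
      using est[OF t st I3, of 0] blk[of 0 t] unfolding xa_def blk_def by simp
    have em: "\<bar>xm - Xi F (evpt j i 1)\<bar> \<le> 3 * eps"
      using est[OF t st I3, of 1] blk[of 1 t] unfolding xm_def blk_def by simp
    have eb: "\<bar>xb - Xi F (evpt j i 2)\<bar> \<le> 3 * eps"
      using est[OF t st I3, of 2] blk[of 2 t] unfolding xb_def blk_def by (simp add: mult.commute)
    have RS2: "R (Suc t) = (if xm - (xa + xb) / 2 > 12 * eps then (Some (Suc j, 2 * i), snd (R t))
         else (nxt j i, snd (R t) @ [(evpt j i 0, evpt j i 2, xa, xb)]))"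
      unfolding RS tstep_def st xa_def xm_def xb_def Let_def by simp
    show ?thesis
    proof (cases "xm - (xa + xb) / 2 > 12 * eps")
      case True
      then have R2: "R (Suc t) = (Some (Suc j, 2 * i), snd (R t))" using RS2 by simp
      have "dev F j i > 6 * eps" using True ea em eb unfolding dev_def abs_le_iff add_divide_distrib
        by linarith
      then have fij: "(j, i) \<in> FailT F eps" using I3 unfolding FailT_def by simp
      have anc: "(j', 2 * i div 2 ^ (Suc j - j')) \<in> FailT F eps" if "j' < Suc j" for j'
      proof (cases "j' = j")
        case True then show ?thesis using fij by simp
      next
        case False
        then have "j' < j" using that by simp
        have "Suc j - j' = Suc (j - j')" using \<open>j' < j\<close> by simp
        then have "2 * i div 2 ^ (Suc j - j') = i div 2 ^ (j - j')"
          by (simp add: div_mult2_eq)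
        then show ?thesis using I4 \<open>j' < j\<close> by simp
      qed
      have "Inv F eps (R (Suc t))" unfolding Inv_def R2 using I1 I2 I3 anc evpt_rel(3)[of j i]
        by auto
      moreover have "keylt (evpt j i 0, j) (evpt j' i' 0, j')" if "fst (R (Suc t)) = Some (j', i')" for j' i'
        using that R2 evpt_rel(3)[of j i] unfolding keylt_def by auto
      ultimately show ?thesis by blast
    next
      case False
      define p where "p = (evpt j i 0, evpt j i 2, xa, xb)"
      then have R2: "R (Suc t) = (nxt j i, snd (R t) @ [p])" using RS2 False by simp
      have a0: "0 \<le> evpt j i 0" and b2: "evpt j i 2 \<le> 2" using evpt_range[OF I3] by auto
      have gp: "good F eps p"
      proof -
        have "\<bar>Xi F u - chord p u\<bar> \<le> 39 * eps" if "evpt j i 0 \<le> u" "u \<le> evpt j i 2" for u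
        proof -
          have "\<bar>Xi F u - (xa + (xb - xa) * (u - evpt j i 0) / (evpt j i 2 - evpt j i 0))\<bar>
                 \<le> 3 * eps + 2 * (12 * eps + 2 * (3 * eps))"
            using piece_ok[OF F a0 evpt_rel(2) b2 that evpt_rel(1) ea em eb, where thr = "12 * eps"] False by simp
          then show ?thesis unfolding chord_def p_def by simp
        qed
        then show ?thesis unfolding good_def p_def using a0 b2 evpt_rel(2)[of j i] by auto
      qed
      have newpos: "posn (nxt j i) = evpt j i 2"
      proof (cases "nxt j i")
        case None
        then have "Suc i = 2 ^ j" using nxt_None[OF I3] by simp
        then have "real (2 * i + 2) = 2 * 2 ^ j" by (metis mult_Suc_right numeral_2_eq_2 of_nat_mult of_nat_numeral of_nat_power add.commute)
        then show ?thesis using None unfolding evpt_def by simp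
      next
        case (Some a)
        then obtain j' i' where s: "nxt j i = Some (j', i')" by (cases a) auto
        have "real i' / 2 ^ j' = real (Suc i) / 2 ^ j" using nxt_Some[OF I3 s] by simp
        have "evpt j' i' 0 = 2 * (real i' / 2 ^ j')" by (simp add: evpt_def)
        also have "\<dots> = 2 * (real (Suc i) / 2 ^ j)" using \<open>real i' / 2 ^ j' = real (Suc i) / 2 ^ j\<close> by simp
        also have "\<dots> = evpt j i 2" by (simp add: evpt_def)
        finally show ?thesis using s by simp
      qed
      have cov: "\<exists>q\<in>set (snd (R t) @ [p]). fst q \<le> u \<and> u \<le> fst (snd q)"
        if "0 < u" "u \<le> evpt j i 2" for u
      proof (cases "u \<le> evpt j i 0")
        case True then show ?thesis using I2 that by auto
      next
        case False then show ?thesis using that unfolding p_def by auto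
      qed
      have nd: "case nxt j i of None \<Rightarrow> True | Some (j', i') \<Rightarrow> i' < 2 ^ j' \<and> (\<forall>j''<j'. (j'', i' div 2 ^ (j' - j'')) \<in> FailT F eps)"
      proof (cases "nxt j i")
        case None then show ?thesis by simp
      next
        case (Some a)
        then obtain j' i' where s: "nxt j i = Some (j', i')" by (cases a) auto
        have h: "j' \<le> j \<and> i' < 2 ^ j' \<and> (\<forall>j''<j'. i' div 2 ^ (j' - j'') = i div 2 ^ (j - j''))"
          using nxt_Some[OF I3 s] by simp
        then show ?thesis using s I4 by auto
      qed
      have "Inv F eps (R (Suc t))" unfolding Inv_def R2 using I1 gp cov nd newpos by auto
      moreover have "keylt (evpt j i 0, j) (evpt j' i' 0, j')" if "fst (R (Suc t)) = Some (j', i')" for j' i'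
      proof -
        have "nxt j i = Some (j', i')" using that R2 by simp
        then have "evpt j' i' 0 = evpt j i 2" using newpos by simp
        then show ?thesis using evpt_rel(2)[of j i] unfolding keylt_def by simp
      qed
      ultimately show ?thesis by blast
    qed
  qed
  show "Inv F eps (R (Suc t))"
  proof (cases "fst (R t)")
    case None then show ?thesis using case_none I by simp
  next
    case (Some a) then obtain j i where "fst (R t) = Some (j, i)" by (cases a) auto
    then show ?thesis using main by blast
  qed
  show "fst (R t) = None \<Longrightarrow> fst (R (Suc t)) = None" using case_none by simp
  show "fst (R t) = Some (j, i) \<Longrightarrow> fst (R (Suc t)) = Some (j', i') \<Longrightarrow>
       keylt (evpt j i 0, j) (evpt j' i' 0, j')" using main by blast
qed

end

lemma evpt_rg:
  assumes "i < 2 ^ j" "e \<le> 2" shows "0 \<le> evpt j i e" "evpt j i e \<le> 2"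
proof -
  have "2 * i + e \<le> 2 * 2 ^ j" using assms by simp
  then have "real (2 * i + e) \<le> 2 * 2 ^ j" by (metis of_nat_le_iff of_nat_mult of_nat_numeral of_nat_power)
  then show "evpt j i e \<le> 2" unfolding evpt_def by (simp add: divide_le_eq)
  show "0 \<le> evpt j i e" unfolding evpt_def by simp
qed

lemma dev_nn:
  assumes F: "smooth_convex_cdf F" and i: "i < 2 ^ j" shows "0 \<le> dev F j i"
proof -
  have "Xi F (evpt j i 0) + (Xi F (evpt j i 2) - Xi F (evpt j i 0)) * (evpt j i 1 - evpt j i 0) / (evpt j i 2 - evpt j i 0)
        \<le> Xi F (evpt j i 1)"
    using chord_below[OF F evpt_rg(1)[OF i] evpt_rel(2) evpt_rg(2)[OF i], of "evpt j i 1"] evpt_rel(1,2)[of j i]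
    by simp
  moreover have "(evpt j i 1 - evpt j i 0) / (evpt j i 2 - evpt j i 0) = 1 / 2"
    using evpt_rel(1,2)[of j i] by (simp add: field_simps)
  ultimately have "Xi F (evpt j i 0) + (Xi F (evpt j i 2) - Xi F (evpt j i 0)) * (1 / 2) \<le> Xi F (evpt j i 1)"
    by (metis times_divide_eq_right)
  then show ?thesis unfolding dev_def by (simp add: field_simps)
qed

lemma dev_le:
  assumes F: "smooth_convex_cdf F" shows "dev F j i \<le> 1 / (2 * 2 ^ j)"
proof -
  have d: "evpt j i 1 - evpt j i 0 = 1 / 2 ^ j" unfolding evpt_def by (simp add: field_simps)
  have "Xi F (evpt j i 1) - Xi F (evpt j i 0) \<le> evpt j i 1 - evpt j i 0"
    using Xi_lip[OF F] evpt_rel(1,2)[of j i] by simp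
  then have a: "Xi F (evpt j i 1) - Xi F (evpt j i 0) \<le> 1 / 2 ^ j" using d by simp
  have b: "Xi F (evpt j i 1) \<le> Xi F (evpt j i 2)"
    using Xi_mono[OF F] evpt_rel(1,2)[of j i] by simp
  have "2 * dev F j i = (Xi F (evpt j i 1) - Xi F (evpt j i 0)) - (Xi F (evpt j i 2) - Xi F (evpt j i 1))"
    unfolding dev_def by (simp add: algebra_simps)
  then have "2 * dev F j i \<le> 1 / 2 ^ j" using a b by linarith
  then show ?thesis by (simp add: field_simps)
qed

lemma dev_sum2:
  assumes F: "smooth_convex_cdf F" shows "(\<Sum>i<2^j. dev F j i) \<le> 1 / (2 * 2 ^ j)"
proof -
  have h: "(0::real) < 1 / 2 ^ j" "real (2 * 2 ^ j) * (1 / 2 ^ j) \<le> (2::real)" by simp_all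
  have "dev F j i = Xi F (real (2*i+1) * (1 / 2 ^ j)) - (Xi F (real (2*i) * (1 / 2 ^ j)) + Xi F (real (2*i+2) * (1 / 2 ^ j))) / 2" for i
    unfolding dev_def evpt_def by simp
  then show ?thesis using dev_sum[OF F h] by simp
qed

lemma card_level:
  assumes F: "smooth_convex_cdf F" and e: "0 < eps"
  shows "real (card {i. i < 2 ^ j \<and> dev F j i > 6 * eps}) \<le> 1 / (2 * sqrt eps)"
proof -
  define S where "S = {i. i < 2 ^ j \<and> dev F j i > 6 * eps}"
  have Ss: "S \<subseteq> {..<2^j}" unfolding S_def by auto
  have fin: "finite S" using Ss finite_subset by blast
  define c where "c = real (card S)"
  have c1: "c \<le> 2 ^ j" unfolding c_def using card_mono[OF _ Ss] by (metis card_lessThan finite_lessThan of_nat_le_iff of_nat_numeral of_nat_power)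
  have "c * (6 * eps) = (\<Sum>i\<in>S. 6 * eps)" unfolding c_def by simp
  also have "\<dots> \<le> (\<Sum>i\<in>S. dev F j i)" using fin by (intro sum_mono) (auto simp: S_def less_imp_le)
  also have "\<dots> \<le> (\<Sum>i<2^j. dev F j i)" using Ss dev_nn[OF F] by (intro sum_mono2) auto
  also have "\<dots> \<le> 1 / (2 * 2 ^ j)" by (rule dev_sum2[OF F])
  finally have c2: "c * (6 * eps) \<le> 1 / (2 * 2 ^ j)" .
  have c0: "0 \<le> c" unfolding c_def by simp
  have "c * c * (6 * eps) \<le> 2 ^ j * (1 / (2 * 2 ^ j))"
    using mult_mono[OF c1 c2] c0 e by (simp add: mult.assoc)
  then have "c * c * (6 * eps) \<le> 1 / 2" by simp
  moreover have "sqrt eps * sqrt eps = eps" using e by simp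
  then have "(2 * sqrt eps * c)^2 = 4 * (c * c * eps)" by (simp add: power2_eq_square algebra_simps)
  ultimately have sq: "(2 * sqrt eps * c)^2 \<le> 1" by (simp add: algebra_simps)
  have "2 * sqrt eps * c \<le> 1"
  proof (rule ccontr)
    assume "\<not> 2 * sqrt eps * c \<le> 1"
    then have "1 < 2 * sqrt eps * c" by simp
    then have "1 < (2 * sqrt eps * c) * (2 * sqrt eps * c)" using less_1_mult by blast
    then show False using sq by (simp add: power2_eq_square)
  qed
  then show ?thesis using e unfolding S_def[symmetric] c_def[symmetric] by (simp add: field_simps)
qed

lemma level_empty:
  assumes F: "smooth_convex_cdf F" and e: "0 < eps" and L: "1 / eps \<le> 2 ^ L" and j: "L \<le> j"
  shows "{i. i < 2 ^ j \<and> dev F j i > 6 * eps} = {}"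
proof -
  have "(2::real) ^ L \<le> 2 ^ j" using j by (intro power_increasing) auto
  then have "1 / eps \<le> 2 ^ j" using L by linarith
  then have "1 / (2 * 2 ^ j) \<le> eps / 2" using e by (simp add: field_simps)
  then have "dev F j i \<le> 6 * eps" for i using dev_le[OF F, of j i] e by linarith
  then show ?thesis by (auto simp: not_less[symmetric])
qed

lemma card_FailT:
  assumes F: "smooth_convex_cdf F" and e: "0 < eps" and L: "1 / eps \<le> 2 ^ L"
  shows "finite (FailT F eps)" "real (card (FailT F eps)) \<le> real L / (2 * sqrt eps)"
proof -
  define S where "S j = {i. i < 2 ^ j \<and> dev F j i > 6 * eps}" for j
  have eq: "FailT F eps \<subseteq> (\<Union>j<L. Pair j ` S j)"
  proof
    fix x assume x: "x \<in> FailT F eps"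
    obtain j i where xe: "x = (j, i)" by (cases x)
    have "i \<in> S j" using x xe unfolding FailT_def S_def by auto
    moreover have "j < L"
    proof (rule ccontr)
      assume "\<not> j < L"
      then have "S j = {}" using level_empty[OF F e L, of j] unfolding S_def by simp
      then show False using \<open>i \<in> S j\<close> by simp
    qed
    ultimately show "x \<in> (\<Union>j<L. Pair j ` S j)" using xe by auto
  qed
  have finS: "finite (S j)" for j unfolding S_def by (rule finite_subset[of _ "{..<2^j}"]) auto
  have fu: "finite (\<Union>j<L. Pair j ` S j)" using finS by auto
  show "finite (FailT F eps)" using eq fu finite_subset by blast
  have "card (FailT F eps) \<le> card (\<Union>j<L. Pair j ` S j)" using card_mono[OF fu eq] .
  also have "\<dots> \<le> (\<Sum>j<L. card (Pair j ` S j))" by (rule card_UN_le) simp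
  also have "\<dots> = (\<Sum>j<L. card (S j))" by (intro sum.cong refl card_image) (simp add: inj_on_def)
  finally have "real (card (FailT F eps)) \<le> (\<Sum>j<L. real (card (S j)))" by (metis of_nat_le_iff of_nat_sum)
  also have "\<dots> \<le> (\<Sum>j<L. 1 / (2 * sqrt eps))" using card_level[OF F e] unfolding S_def by (intro sum_mono) auto
  also have "\<dots> = real L / (2 * sqrt eps)" by simp
  finally show "real (card (FailT F eps)) \<le> real L / (2 * sqrt eps)" .
qed

context alg
begin

lemma Inv_all: "t \<le> T \<Longrightarrow> Inv F eps (R t)"
proof (induction t)
  case 0 then show ?case using Inv_init by simp
next
  case (Suc t) then show ?case using step(1)[of t] by simp
qed

lemma none_stays: "t' \<le> T \<Longrightarrow> t \<le> t' \<Longrightarrow> fst (R t) = None \<Longrightarrow> fst (R t') = None"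
proof (induction t')
  case 0 then show ?case by simp
next
  case (Suc t')
  show ?case
  proof (cases "t = Suc t'")
    case True then show ?thesis using Suc by simp
  next
    case False
    then have "fst (R t') = None" using Suc by simp
    then show ?thesis using step(2)[of t'] Inv_all[of t'] Suc.prems by simp
  qed
qed

definition nd where "nd t = the (fst (R t))"
definition key where "key t = (evpt (fst (nd t)) (snd (nd t)) 0, fst (nd t))"

lemma keys:
  assumes all: "\<forall>t\<le>T. fst (R t) \<noteq> None"
  shows "t \<le> T \<Longrightarrow> s < t \<Longrightarrow> keylt (key s) (key t)"
proof (induction t)
  case 0 then show ?case by simp
next
  case (Suc t)
  have s1: "fst (R t) = Some (fst (nd t), snd (nd t))" using all Suc.prems unfolding nd_def by auto
  have s2: "fst (R (Suc t)) = Some (fst (nd (Suc t)), snd (nd (Suc t)))" using all Suc.prems unfolding nd_def by auto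
  have k: "keylt (key t) (key (Suc t))"
    using step(3)[OF _ Inv_all s1 s2] Suc.prems unfolding key_def by simp
  show ?case
  proof (cases "s = t")
    case True then show ?thesis using k by simp
  next
    case False
    then have "keylt (key s) (key t)" using Suc by simp
    then show ?thesis using k keylt_trans by blast
  qed
qed

lemma terminates:
  assumes TL: "real L / sqrt eps < real T"
  shows "fst (R T) = None"
proof (rule ccontr)
  assume ne: "fst (R T) \<noteq> None"
  have all: "\<forall>t\<le>T. fst (R t) \<noteq> None"
  proof (intro allI impI notI)
    fix t assume "t \<le> T" "fst (R t) = None"
    then have "fst (R T) = None" using none_stays[of T t] by simp
    then show False using ne by simp
  qed
  have inj: "inj_on nd {0..T}"
  proof (rule inj_onI)
    fix s t assume st: "s \<in> {0..T}" "t \<in> {0..T}" "nd s = nd t"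
    then have kk: "key s = key t" unfolding key_def by simp
    show "s = t"
    proof (rule ccontr)
      assume "s \<noteq> t"
      then have "s < t \<or> t < s" by arith
      moreover have "s \<le> T" "t \<le> T" using st by auto
      ultimately have "keylt (key s) (key t) \<or> keylt (key t) (key s)" using keys[OF all] by blast
      then show False using kk keylt_irrefl by simp
    qed
  qed
  define g :: "(nat \<times> nat) \<times> nat \<Rightarrow> nat \<times> nat" where "g = (\<lambda>(p, b). (Suc (fst p), 2 * snd p + b))"
  define Vis where "Vis = insert (0, 0) (g ` (FailT F eps \<times> {0, 1::nat}))"
  have sub: "nd ` {0..T} \<subseteq> Vis"
  proof
    fix x assume "x \<in> nd ` {0..T}"
    then obtain t where t: "t \<le> T" "x = nd t" by auto
    obtain j i where x: "x = (j, i)" by (cases x)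
    have st: "fst (R t) = Some (j, i)" using all t x unfolding nd_def by auto
    have I: "i < 2 ^ j" "\<forall>j'<j. (j', i div 2 ^ (j - j')) \<in> FailT F eps"
      using Inv_all[OF t(1)] st unfolding Inv_def by auto
    show "x \<in> Vis"
    proof (cases j)
      case 0 then show ?thesis using I x unfolding Vis_def by simp
    next
      case (Suc j0)
      have f: "(j0, i div 2) \<in> FailT F eps" using I(2)[rule_format, of j0] Suc by simp
      have "i = 2 * (i div 2) + i mod 2" by simp
      moreover have "i mod 2 \<in> {0, 1}" by auto
      ultimately have eq: "x = g ((j0, i div 2), i mod 2)"
        using Suc x unfolding g_def by simp
      have mem: "((j0, i div 2), i mod 2) \<in> FailT F eps \<times> {0, 1::nat}"
        using f \<open>i mod 2 \<in> {0, 1}\<close> by simp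
      have "x \<in> g ` (FailT F eps \<times> {0, 1::nat})"
        by (rule image_eqI[of x g, OF eq mem])
      then show ?thesis unfolding Vis_def by (rule insertI2)
    qed
  qed
  have finF: "finite (FailT F eps)" using card_FailT[OF F e0 L] by simp
  have finP: "finite (FailT F eps \<times> {0, 1::nat})" using finF by simp
  have finI: "finite (g ` (FailT F eps \<times> {0, 1::nat}))"
    using finP by (rule finite_imageI)
  have "card Vis \<le> Suc (card (g ` (FailT F eps \<times> {0, 1::nat})))"
    unfolding Vis_def using finI by (simp add: card_insert_if)
  also have "\<dots> \<le> Suc (card (FailT F eps \<times> {0, 1::nat}))"
    using card_image_le[OF finP] by simp
  also have "\<dots> = Suc (2 * card (FailT F eps))" using finF by (simp add: card_cartesian_product)
  finally have cV: "card Vis \<le> Suc (2 * card (FailT F eps))" .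
  have fV: "finite Vis" unfolding Vis_def using finI by simp
  have "Suc T = card (nd ` {0..T})" using card_image[OF inj] by simp
  also have "\<dots> \<le> card Vis" using card_mono[OF fV sub] .
  finally have "Suc T \<le> Suc (2 * card (FailT F eps))" using cV by simp
  then have "real T \<le> 2 * real (card (FailT F eps))" by linarith
  also have "\<dots> \<le> real L / sqrt eps" using card_FailT(2)[OF F e0 L] e0 by (simp add: field_simps)
  finally show False using TL by simp
qed

lemma final:
  assumes TL: "real L / sqrt eps < real T"
  shows "\<bar>Xh (snd (R T)) u - Xi F u\<bar> \<le> 39 * eps"
proof -
  have I: "Inv F eps (R T)" using Inv_all by simp
  have nn: "fst (R T) = None" using terminates[OF TL] .
  have G: "\<forall>p\<in>set (snd (R T)). good F eps p"
    and C: "\<forall>u. 0 < u \<and> u \<le> 2 \<longrightarrow> (\<exists>p\<in>set (snd (R T)). fst p \<le> u \<and> u \<le> fst (snd p))"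
    using I nn unfolding Inv_def by auto
  show ?thesis
  proof (cases "u \<le> 0 \<or> 2 \<le> u")
    case True
    then show ?thesis using Xi_low[OF F, of u] Xi_high[OF F, of u] e0 unfolding Xh_def by auto
  next
    case False
    then have u: "0 < u" "u < 2" by auto
    define P where "P p = (p \<in> set (snd (R T)) \<and> fst p \<le> u \<and> u \<le> fst (snd p))" for p
    obtain p0 where "p0 \<in> set (snd (R T))" "fst p0 \<le> u" "u \<le> fst (snd p0)" using C u by auto
    then have ex: "\<exists>p. P p" unfolding P_def by blast
    then have "P (SOME p. P p)" by (rule someI_ex)
    then have "\<bar>Xi F u - chord (SOME p. P p) u\<bar> \<le> 39 * eps" using G unfolding P_def good_def by auto
    moreover have "Xh (snd (R T)) u = chord (SOME p. P p) u"
      using u ex unfolding Xh_def P_def by auto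
    ultimately show ?thesis by (simp add: abs_minus_commute)
  qed
qed

end

lemma levy_from_X:
  assumes F: "smooth_convex_cdf F" and D: "0 \<le> \<Delta>" and Y: "\<And>u. \<bar>Y u - Xi F u\<bar> \<le> \<Delta>"
  shows "\<Delta> \<in> levy_set F (\<lambda>v. Sup {u. Y u \<le> v} - v)"
  unfolding levy_set_def
proof (intro CollectI conjI allI D)
  fix v
  define S where "S = {u. Y u \<le> v}"
  define u0 where "u0 = phi F (v - \<Delta>)"
  have u0S: "u0 \<in> S"
  proof -
    have "Xi F u0 = v - \<Delta>" unfolding u0_def using Xi_phi[OF F] .
    then show ?thesis using Y[of u0] unfolding S_def by (simp add: abs_le_iff)
  qed
  have ub: "u \<le> phi F (v + \<Delta>)" if "u \<in> S" for u
  proof -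
    have "Xi F u \<le> v + \<Delta>" using that Y[of u] unfolding S_def by (simp add: abs_le_iff)
    then have "phi F (Xi F u) \<le> phi F (v + \<Delta>)"
      using phi_strict[OF F, of "Xi F u" "v + \<Delta>"] by (cases "Xi F u = v + \<Delta>") auto
    then show ?thesis using phi_Xi[OF F] by simp
  qed
  have bdd: "bdd_above S" unfolding bdd_above_def using ub by blast
  have s1: "u0 \<le> Sup S" using cSup_upper[OF u0S bdd] .
  have s2: "Sup S \<le> phi F (v + \<Delta>)" using u0S ub by (intro cSup_least) auto
  show "F (v - \<Delta>) - \<Delta> \<le> Sup {u. Y u \<le> v} - v"
    using s1 unfolding S_def u0_def phi_def by simp
  show "Sup {u. Y u \<le> v} - v \<le> F (v + \<Delta>) + \<Delta>"
    using s2 unfolding S_def phi_def by simp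
qed

lemma params:
  assumes e: "0 < eps" "eps < 1" and Ld: "L = nat \<lceil>log 2 (1 / eps)\<rceil>"
  shows "1 / eps \<le> 2 ^ L" "1 \<le> L" "real L \<le> 2 * (1 + ln (1 / eps))"
proof -
  have gt1: "1 < 1 / eps" using e by simp
  have lg: "0 < log 2 (1 / eps)" using gt1 e by simp
  have rL: "real L = of_int \<lceil>log 2 (1 / eps)\<rceil>" using lg Ld by simp
  have Lge: "log 2 (1 / eps) \<le> real L" using rL by linarith
  have "1 / eps = 2 powr (log 2 (1 / eps))" using gt1 e by simp
  also have "\<dots> \<le> 2 powr (real L)" using Lge by (intro powr_mono) auto
  also have "\<dots> = 2 ^ L" by (simp add: powr_realpow)
  finally show "1 / eps \<le> 2 ^ L" .
  have "0 < real L" using lg Lge by linarith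
  then show "1 \<le> L" by simp
  have l0: "0 < ln (1 / eps)" using gt1 e by simp
  have "log 2 (1 / eps) = ln (1 / eps) / ln 2" by (simp add: log_def)
  also have "\<dots> \<le> ln (1 / eps) / (2 / 3)"
    using ln2_ge_two_thirds l0 by (intro divide_left_mono) auto
  finally have "log 2 (1 / eps) \<le> 3 / 2 * ln (1 / eps)" by simp
  moreover have "real L < log 2 (1 / eps) + 1" using rL by linarith
  ultimately have "real L \<le> 2 + 2 * ln (1 / eps)" using l0 by linarith
  then show "real L \<le> 2 * (1 + ln (1 / eps))" by simp
qed

lemma Nbound:
  assumes e: "0 < eps" "eps < 1" and Ld: "L = nat \<lceil>log 2 (1 / eps)\<rceil>"
    and Td: "T = nat \<lfloor>real L / sqrt eps\<rfloor> + 1"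
  shows "real (3 * L * T) \<le> 100 * eps powr (-1/2) * (1 + ln (1 / eps)) ^ 2"
proof -
  define A where "A = 1 + ln (1 / eps)"
  define s where "s = sqrt eps"
  have s: "0 < s" "s \<le> 1" using e unfolding s_def by auto
  have A1: "1 \<le> A" unfolding A_def using e by simp
  have LA: "real L \<le> 2 * A" using params(3)[OF e Ld] unfolding A_def .
  have xnn: "0 \<le> real L / s" using s by simp
  have "real T = real (nat \<lfloor>real L / s\<rfloor>) + 1" using Td s_def by simp
  also have "\<dots> \<le> real L / s + 1" using xnn by linarith
  finally have T1: "real T \<le> real L / s + 1" .
  have "real L / s \<le> 2 * A / s" using LA s by (simp add: divide_right_mono)
  moreover have "1 \<le> A / s" using A1 s by (simp add: le_divide_eq)
  ultimately have T2: "real T \<le> 3 * A / s" using T1 by (simp add: add_divide_distrib[symmetric])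
  have "real (3 * L * T) = 3 * real L * real T" by simp
  also have "\<dots> \<le> 3 * (2 * A) * (3 * A / s)"
    using LA T2 by (intro mult_mono) auto
  also have "\<dots> = 18 * A ^ 2 / s" by (simp add: power2_eq_square)
  also have "\<dots> \<le> 100 * A ^ 2 / s" using s by (simp add: divide_right_mono)
  also have "\<dots> = 100 * eps powr (-1/2) * A ^ 2"
  proof -
    have "eps powr (-1/2) = inverse (eps powr (1/2))" using powr_minus[of eps "1/2"] by simp
    also have "\<dots> = 1 / s" unfolding s_def using e by (simp add: powr_half_sqrt inverse_eq_divide)
    finally show ?thesis by simp
  qed
  finally show ?thesis unfolding A_def .
qed

theorem theorem9:
  shows "\<exists>(C::real) (k::nat). C > 0 \<and>
    (\<forall>eps::real. 0 < eps \<and> eps < 1 \<longrightarrow>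
      (\<exists>(N::nat) (q :: real list \<Rightarrow> real) (out :: real list \<Rightarrow> real \<Rightarrow> real).
         real N \<le> C * eps powr (-1/2) * (1 + ln (1 / eps)) ^ k \<and>
         (\<forall>F as. smooth_convex_cdf F \<longrightarrow> perturbed_answers eps F N q as \<longrightarrow>
            levy_set F (out as) \<noteq> {} \<and> levy_dist F (out as) \<le> C * eps)))"
proof (rule exI[of _ "100::real"], rule exI[of _ "2::nat"], intro conjI allI impI)
  show "(0::real) < 100" by simp
  fix eps :: real assume e: "0 < eps \<and> eps < 1"
  define L where "L = nat \<lceil>log 2 (1 / eps)\<rceil>"
  define T where "T = nat \<lfloor>real L / sqrt eps\<rfloor> + 1"
  have P: "1 / eps \<le> 2 ^ L" "1 \<le> L" using params[OF _ _ L_def] e by auto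
  have TL: "real L / sqrt eps < real T"
  proof -
    have "0 \<le> real L / sqrt eps" using e by simp
    then have "real (nat \<lfloor>real L / sqrt eps\<rfloor>) = of_int \<lfloor>real L / sqrt eps\<rfloor>" by simp
    then show ?thesis unfolding T_def by linarith
  qed
  have Nb: "real (3 * L * T) \<le> 100 * eps powr (-1/2) * (1 + ln (1 / eps)) ^ 2"
    using Nbound[OF _ _ L_def T_def] e by auto
  have G: "\<forall>F as. smooth_convex_cdf F \<longrightarrow> perturbed_answers eps F (3 * L * T) (qry L (12 * eps)) as \<longrightarrow>
            levy_set F (outG (snd (run L (12 * eps) T as))) \<noteq> {} \<and>
            levy_dist F (outG (snd (run L (12 * eps) T as))) \<le> 100 * eps"
  proof (intro allI impI)
    fix F as
    assume F: "smooth_convex_cdf F" and pa: "perturbed_answers eps F (3 * L * T) (qry L (12 * eps)) as"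
    interpret alg eps F as L T using F e P pa by unfold_locales auto
    have err: "\<And>u. \<bar>Xh (snd (run L (12 * eps) T as)) u - Xi F u\<bar> \<le> 39 * eps"
      using final[OF TL] by simp
    have "39 * eps \<in> levy_set F (\<lambda>v. Sup {u. Xh (snd (run L (12 * eps) T as)) u \<le> v} - v)"
      using levy_from_X[OF F _ err] e by simp
    moreover have "(\<lambda>v. Sup {u. Xh (snd (run L (12 * eps) T as)) u \<le> v} - v) = outG (snd (run L (12 * eps) T as))"
      unfolding outG_def by (rule ext) simp
    ultimately have mem: "39 * eps \<in> levy_set F (outG (snd (run L (12 * eps) T as)))" by simp
    have bdd: "bdd_below (levy_set F (outG (snd (run L (12 * eps) T as))))"
      unfolding bdd_below_def levy_set_def by auto
    have "levy_dist F (outG (snd (run L (12 * eps) T as))) \<le> 39 * eps"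
      unfolding levy_dist_def using cInf_lower[OF mem bdd] .
    then show "levy_set F (outG (snd (run L (12 * eps) T as))) \<noteq> {} \<and>
            levy_dist F (outG (snd (run L (12 * eps) T as))) \<le> 100 * eps" using e mem by auto
  qed
  show "\<exists>N q out. real N \<le> 100 * eps powr (-1/2) * (1 + ln (1 / eps)) ^ 2 \<and>
         (\<forall>F as. smooth_convex_cdf F \<longrightarrow> perturbed_answers eps F N q as \<longrightarrow>
            levy_set F (out as) \<noteq> {} \<and> levy_dist F (out as) \<le> 100 * eps)"
    apply (rule exI[of _ "3 * L * T"], rule exI[of _ "qry L (12 * eps)"],
           rule exI[of _ "\<lambda>as. outG (snd (run L (12 * eps) T as))"])
    using Nb G by simp
qed

end
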